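(* Let $t:\Sigma^*\to\Omega^*$ be a rational partial function with suffix-closed domain. If $X\subseteq\mathrm{dom}(t)$ is a context-free language and $t(X)$ has exponential growth, then $X$ has exponential $t$-growth and exponential $\overleftarrow{t}$-growth.
   Context: A partial function is rational if its graph is a rational subset of $\Sigma^*\times\Omega^*$. Suffix-closed: closed under taking suffixes. The suffix expansion $\overleftarrow{t}$ maps $a_1\cdots a_n\in\mathrm{dom}(t)$ to the sequence $(t(a_1\cdots a_n),t(a_2\cdots a_n),\dots,t(a_n))$. For a partial function $f$ and $X\subseteq\mathrm{dom}(f)$, the $f$-growth of $X$ is $n\mapsto|f(X\cap\Sigma^{\le n})|$; the growth of a language $Y\subseteq\Omega^*$ is $n\mapsto|Y\cap\Omega^{\le n}|$. A function $\gamma$ grows exponentially if there is $c>1$ with $\gamma(n)\ge c^n$ for infinitely many $n$. *)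

theory Defs
  imports Complex_Main "HOL-Library.Sublist"
begin

definition pair_concat :: "('a list \<times> 'b list) set \<Rightarrow> ('a list \<times> 'b list) set \<Rightarrow> ('a list \<times> 'b list) set" where
  "pair_concat A B = {(u1 @ u2, v1 @ v2) | u1 u2 v1 v2. (u1, v1) \<in> A \<and> (u2, v2) \<in> B}"

inductive_set pair_star :: "('a list \<times> 'b list) set \<Rightarrow> ('a list \<times> 'b list) set"
  for A where
  star_empty: "([], []) \<in> pair_star A"
| star_step: "(u1, v1) \<in> A \<Longrightarrow> (u2, v2) \<in> pair_star A \<Longrightarrow> (u1 @ u2, v1 @ v2) \<in> pair_star A"

inductive_set rational_sets :: "('a list \<times> 'b list) set set" where
  rat_finite: "finite S \<Longrightarrow> S \<in> rational_sets"
| rat_union: "A \<in> rational_sets \<Longrightarrow> B \<in> rational_sets \<Longrightarrow> A \<union> B \<in> rational_sets"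
| rat_concat: "A \<in> rational_sets \<Longrightarrow> B \<in> rational_sets \<Longrightarrow> pair_concat A B \<in> rational_sets"
| rat_star: "A \<in> rational_sets \<Longrightarrow> pair_star A \<in> rational_sets"

definition graph :: "('a list \<Rightarrow> 'b list option) \<Rightarrow> ('a list \<times> 'b list) set" where
  "graph t = {(u, v). t u = Some v}"

definition rational_pfun :: "('a list \<Rightarrow> 'b list option) \<Rightarrow> bool" where
  "rational_pfun t \<longleftrightarrow> graph t \<in> rational_sets"

definition suffix_closed :: "'a list set \<Rightarrow> bool" where
  "suffix_closed L \<longleftrightarrow> (\<forall>u \<in> L. \<forall>v. suffix v u \<longrightarrow> v \<in> L)"

definition pimage :: "('a \<Rightarrow> 'b option) \<Rightarrow> 'a set \<Rightarrow> 'b set" where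
  "pimage f A = {v. \<exists>u \<in> A. f u = Some v}"

definition suffix_expansion :: "('a list \<Rightarrow> 'b list option) \<Rightarrow> 'a list \<Rightarrow> 'b list list option" where
  "suffix_expansion t w =
     (if w \<in> dom t then Some (map (\<lambda>i. the (t (drop i w))) [0..<length w]) else None)"

definition f_growth :: "('a list \<Rightarrow> 'c option) \<Rightarrow> 'a list set \<Rightarrow> nat \<Rightarrow> nat" where
  "f_growth f X n = card (pimage f (X \<inter> {w. length w \<le> n}))"

definition lang_growth :: "'b list set \<Rightarrow> nat \<Rightarrow> nat" where
  "lang_growth Y n = card (Y \<inter> {v. length v \<le> n})"

definition grows_exponentially :: "(nat \<Rightarrow> nat) \<Rightarrow> bool" where
  "grows_exponentially \<gamma> \<longleftrightarrow> (\<exists>c::real. c > 1 \<and> infinite {n. c ^ n \<le> real (\<gamma> n)})"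

inductive cfg_step :: "(nat \<times> (nat + 'a) list) set \<Rightarrow> (nat + 'a) list \<Rightarrow> (nat + 'a) list \<Rightarrow> bool"
  for P where
  "(A, rhs) \<in> P \<Longrightarrow> cfg_step P (u @ [Inl A] @ v) (u @ rhs @ v)"

definition cfg_lang :: "(nat \<times> (nat + 'a) list) set \<Rightarrow> nat \<Rightarrow> 'a list set" where
  "cfg_lang P S = {w. (cfg_step P)\<^sup>*\<^sup>* [Inl S] (map Inr w)}"

definition context_free :: "'a list set \<Rightarrow> bool" where
  "context_free X \<longleftrightarrow> (\<exists>P S. finite P \<and> X = cfg_lang P S)"

end

theory Submission
  imports Defs
begin


definition ol :: "'x option \<Rightarrow> 'x list" where
  "ol z = (case z of None \<Rightarrow> [] | Some x \<Rightarrow> [x])"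

lemma ol_simps[simp]: "ol None = []" "ol (Some x) = [x]"
  by (simp_all add: ol_def)

lemma length_ol: "length (ol z) \<le> 1"
  by (cases z) auto

type_synonym ('a,'b) trans = "(nat \<times> ('a option \<times> 'b option) \<times> nat) set"

inductive run :: "('a,'b) trans \<Rightarrow> nat \<Rightarrow> 'a list \<Rightarrow> 'b list \<Rightarrow> nat \<Rightarrow> bool"
  for T where
  run_nil: "run T p [] [] p"
| run_cons: "(p,(a,b),p') \<in> T \<Longrightarrow> run T p' u v q \<Longrightarrow> run T p (ol a @ u) (ol b @ v) q"

definition acc :: "nat set \<Rightarrow> nat set \<Rightarrow> ('a,'b) trans \<Rightarrow> ('a list \<times> 'b list) set" where
  "acc I F T = {(u,v). \<exists>p\<in>I. \<exists>q\<in>F. run T p u v q}"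

lemma run_append:
  "run T p u1 v1 r \<Longrightarrow> run T r u2 v2 q \<Longrightarrow> run T p (u1@u2) (v1@v2) q"
  by (induction rule: run.induct) (auto intro: run.intros)

lemma run_mono: "run T p u v q \<Longrightarrow> T \<subseteq> T' \<Longrightarrow> run T' p u v q"
  by (induction rule: run.induct) (auto intro: run.intros)

lemma run_single: "(p,(a,b),q) \<in> T \<Longrightarrow> run T p (ol a) (ol b) q"
  using run_cons[OF _ run_nil, of p a b q T] by simp

definition mapT :: "(nat \<Rightarrow> nat) \<Rightarrow> ('a,'b) trans \<Rightarrow> ('a,'b) trans" where
  "mapT f T = {(f p, l, f q) | p l q. (p,l,q) \<in> T}"

lemma finite_mapT: "finite T \<Longrightarrow> finite (mapT f T)"
proof -
  assume "finite T"
  have "mapT f T = (\<lambda>(p,l,q). (f p, l, f q)) ` T" unfolding mapT_def by force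
  thus ?thesis using \<open>finite T\<close> by simp
qed

lemma run_map: "run T p u v q \<Longrightarrow> run (mapT f T) (f p) u v (f q)"
proof (induction rule: run.induct)
  case (run_nil p) then show ?case by (rule run.run_nil)
next
  case (run_cons p a b p' u v q)
  have "(f p, (a,b), f p') \<in> mapT f T" using run_cons(1) unfolding mapT_def by blast
  then show ?case using run_cons(3) by (rule run.run_cons)
qed

lemma run_back:
  assumes "inj f"
    and H: "\<And>p l x'. (f p, l, x') \<in> T \<Longrightarrow> \<exists>p'. x' = f p' \<and> (p,l,p') \<in> T1"
  shows "run T x u v y \<Longrightarrow> x = f p \<Longrightarrow> \<exists>q. y = f q \<and> run T1 p u v q"
proof (induction arbitrary: p rule: run.induct)
  case (run_nil x) then show ?case by (auto intro: run.run_nil)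
next
  case (run_cons x a b x' u v y)
  obtain p' where "x' = f p'" "(p,(a,b),p') \<in> T1" using H run_cons by blast
  with run_cons.IH obtain q where "y = f q" "run T1 p' u v q" by blast
  then show ?case using \<open>(p,(a,b),p') \<in> T1\<close> by (auto intro: run.run_cons)
qed

lemma run_noout: "run T p u v q \<Longrightarrow> (\<And>l x. (p,l,x) \<notin> T) \<Longrightarrow> u = [] \<and> v = [] \<and> q = p"
  by (erule run.cases) auto

definition aut_rep :: "('a list \<times> 'b list) set \<Rightarrow> bool" where
  "aut_rep R \<longleftrightarrow> (\<exists>I F (T::('a,'b) trans). finite I \<and> finite F \<and> finite T \<and> R = acc I F T)"

lemma aut_empty: "aut_rep {}"
  unfolding aut_rep_def by (rule exI[of _ "{}"], rule exI[of _ "{}"], rule exI[of _ "{}"]) (auto simp: acc_def)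

lemma aut_atom: "aut_rep {(ol a, ol b)}"
proof -
  let ?T = "{(0::nat,(a,b),1::nat)}"
  have "acc {0} {1} ?T = {(ol a, ol b)}"
  proof
    show "{(ol a, ol b)} \<subseteq> acc {0} {1} ?T" unfolding acc_def using run_single[of 0 a b 1 ?T] by auto
    show "acc {0} {1} ?T \<subseteq> {(ol a, ol b)}"
    proof
      fix x assume "x \<in> acc {0} {1} ?T"
      then obtain u v where x: "x = (u,v)" and r: "run ?T 0 u v 1" unfolding acc_def by auto
      from r show "x \<in> {(ol a, ol b)}"
      proof (cases rule: run.cases)
        case (run_cons a' b' p' u' v')
        then have "p' = 1" "a' = a" "b' = b" by auto
        with run_cons have "u' = [] \<and> v' = []" using run_noout[of ?T 1 u' v' 1] by auto
        then show ?thesis using run_cons x \<open>a' = a\<close> \<open>b' = b\<close> by auto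
      qed auto
    qed
  qed
  then have "finite {0::nat} \<and> finite {1::nat} \<and> finite ?T \<and> {(ol a, ol b)} = acc {0} {1} ?T" by simp
  then show ?thesis unfolding aut_rep_def by blast
qed



lemma mapT_iff: "(x,l,y) \<in> mapT f T \<longleftrightarrow> (\<exists>p q. x = f p \<and> y = f q \<and> (p,l,q) \<in> T)"
  unfolding mapT_def by blast

lemma inj_ev: "inj (\<lambda>p::nat. 2*p)" by (rule injI) simp
lemma inj_od: "inj (\<lambda>p::nat. 2*p+1)" by (rule injI) simp

lemma aut_union:
  assumes "aut_rep (A :: ('a list \<times> 'b list) set)" "aut_rep B" shows "aut_rep (A \<union> B)"
proof -
  obtain I1 F1 and T1 :: "('a,'b) trans" where f1: "finite I1" "finite F1" "finite T1" and A: "A = acc I1 F1 T1"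
    using assms(1) unfolding aut_rep_def by blast
  obtain I2 F2 and T2 :: "('a,'b) trans" where f2: "finite I2" "finite F2" "finite T2" and B: "B = acc I2 F2 T2"
    using assms(2) unfolding aut_rep_def by blast
  define ev where "ev = (\<lambda>p::nat. 2*p)"
  define od where "od = (\<lambda>p::nat. 2*p+1)"
  define T where "T = mapT ev T1 \<union> mapT od T2"
  define I where "I = ev ` I1 \<union> od ` I2"
  define F where "F = ev ` F1 \<union> od ` F2"
  have H1: "\<exists>p'. x' = ev p' \<and> (p,l,p') \<in> T1" if "(ev p, l, x') \<in> T" for p l x'
    using that unfolding T_def ev_def od_def by (auto simp: mapT_iff) presburger+
  have H2: "\<exists>p'. x' = od p' \<and> (p,l,p') \<in> T2" if "(od p, l, x') \<in> T" for p l x'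
    using that unfolding T_def ev_def od_def by (auto simp: mapT_iff) presburger+
  have "acc I F T = A \<union> B"
  proof
    show "acc I F T \<subseteq> A \<union> B"
    proof
      fix x assume "x \<in> acc I F T"
      then obtain u v p q where x: "x = (u,v)" and p: "p \<in> I" and q: "q \<in> F" and r: "run T p u v q"
        unfolding acc_def by auto
      show "x \<in> A \<union> B"
      proof (cases "p \<in> ev ` I1")
        case True
        then obtain p1 where p1: "p1 \<in> I1" "p = ev p1" by auto
        from run_back[OF _ H1 r p1(2)] inj_ev obtain q1 where "q = ev q1" "run T1 p1 u v q1"
          unfolding ev_def by blast
        moreover have "q1 \<in> F1" using q \<open>q = ev q1\<close> unfolding F_def ev_def od_def by auto presburger
        ultimately show ?thesis using A x p1 unfolding acc_def by blast
      next
        case False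
        then obtain p1 where p1: "p1 \<in> I2" "p = od p1" using p unfolding I_def by auto
        from run_back[OF _ H2 r p1(2)] inj_od obtain q1 where "q = od q1" "run T2 p1 u v q1"
          unfolding od_def by blast
        moreover have "q1 \<in> F2" using q \<open>q = od q1\<close> unfolding F_def ev_def od_def by auto presburger
        ultimately show ?thesis using B x p1 unfolding acc_def by blast
      qed
    qed
    show "A \<union> B \<subseteq> acc I F T"
    proof
      fix x assume "x \<in> A \<union> B"
      then obtain u v where x: "x = (u,v)" by (cases x) auto
      show "x \<in> acc I F T"
      proof (cases "x \<in> A")
        case True
        then obtain p q where "p \<in> I1" "q \<in> F1" "run T1 p u v q" using A x unfolding acc_def by auto
        then have "run T (ev p) u v (ev q)" using run_map run_mono unfolding T_def by blast
        then show ?thesis using x \<open>p \<in> I1\<close> \<open>q \<in> F1\<close> unfolding acc_def I_def F_def by blast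
      next
        case False
        then have "x \<in> B" using \<open>x \<in> A \<union> B\<close> by auto
        then obtain p q where "p \<in> I2" "q \<in> F2" "run T2 p u v q" using B x unfolding acc_def by auto
        then have "run T (od p) u v (od q)" using run_map run_mono unfolding T_def by blast
        then show ?thesis using x \<open>p \<in> I2\<close> \<open>q \<in> F2\<close> unfolding acc_def I_def F_def by blast
      qed
    qed
  qed
  moreover have "finite I" "finite F" "finite T" using f1 f2 unfolding I_def F_def T_def
    by (auto intro: finite_mapT)
  ultimately show ?thesis unfolding aut_rep_def by blast
qed


lemma ev_od_neq: "2*(p::nat) \<noteq> 2*q+1" by presburger
lemma ev_od_neq': "Suc (2*q) \<noteq> 2*(p::nat)" by presburger

lemma aut_concat:
  assumes "aut_rep (A :: ('a list \<times> 'b list) set)" "aut_rep B" shows "aut_rep (pair_concat A B)"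
proof -
  obtain I1 F1 and T1 :: "('a,'b) trans" where f1: "finite I1" "finite F1" "finite T1" and A: "A = acc I1 F1 T1"
    using assms(1) unfolding aut_rep_def by blast
  obtain I2 F2 and T2 :: "('a,'b) trans" where f2: "finite I2" "finite F2" "finite T2" and B: "B = acc I2 F2 T2"
    using assms(2) unfolding aut_rep_def by blast
  define ev where "ev = (\<lambda>p::nat. 2*p)"
  define od where "od = (\<lambda>p::nat. 2*p+1)"
  define Br :: "('a,'b) trans" where "Br = (\<lambda>(f,i). (ev f, (None,None), od i)) ` (F1 \<times> I2)"
  define T where "T = mapT ev T1 \<union> mapT od T2 \<union> Br"
  define I where "I = ev ` I1"
  define F where "F = od ` F2"
  have H2: "\<exists>p'. x' = od p' \<and> (p,l,p') \<in> T2" if "(od p, l, x') \<in> T" for p l x'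
  proof -
    have "(od p, l, x') \<notin> mapT ev T1" unfolding mapT_iff ev_def od_def using ev_od_neq by metis
    moreover have "(od p, l, x') \<notin> Br" unfolding Br_def ev_def od_def using ev_od_neq' by auto
    ultimately have "(od p, l, x') \<in> mapT od T2" using that unfolding T_def by blast
    then show ?thesis unfolding mapT_iff od_def by auto
  qed
  have ODD: "\<exists>q. y = od q \<and> run T2 p u v q" if "run T (od p) u v y" for p u v y
    using run_back[OF inj_od[folded od_def] H2 that] by blast
  have EV: "run T x u v y \<Longrightarrow> x = ev p \<Longrightarrow> y = od q \<Longrightarrow>
     \<exists>f\<in>F1. \<exists>i\<in>I2. \<exists>u1 u2 v1 v2. u = u1@u2 \<and> v = v1@v2 \<and> run T1 p u1 v1 f \<and> run T2 i u2 v2 q" for x u v y p q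
  proof (induction arbitrary: p rule: run.induct)
    case (run_nil x) then show ?case unfolding ev_def od_def by presburger
  next
    case (run_cons x a b x' u v y)
    have "(x,(a,b),x') \<notin> mapT od T2" unfolding mapT_iff ev_def od_def run_cons(4) using ev_od_neq by metis
    then have "(x,(a,b),x') \<in> mapT ev T1 \<or> (x,(a,b),x') \<in> Br" using run_cons(1) unfolding T_def by blast
    then consider (t1) p' where "x' = ev p'" "(p,(a,b),p') \<in> T1"
      | (br) i where "p \<in> F1" "i \<in> I2" "x' = od i" "a = None" "b = None"
    proof (elim disjE)
      assume "(x,(a,b),x') \<in> mapT ev T1"
      then obtain p0 q0 where "x = ev p0" "x' = ev q0" "(p0,(a,b),q0) \<in> T1" unfolding mapT_iff by blast
      moreover have "p0 = p" using \<open>x = ev p0\<close> run_cons(4) unfolding ev_def by simp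
      ultimately show thesis using that(1) by blast
    next
      assume "(x,(a,b),x') \<in> Br"
      then obtain f i where "f \<in> F1" "i \<in> I2" "x = ev f" "x' = od i" "a = None" "b = None"
        unfolding Br_def by auto
      moreover have "f = p" using \<open>x = ev f\<close> run_cons(4) unfolding ev_def by simp
      ultimately show thesis using that(2) by blast
    qed
    then show ?case
    proof cases
      case t1
      from run_cons.IH[OF t1(1) run_cons(5)] obtain f i u1 u2 v1 v2 where
        "f \<in> F1" "i \<in> I2" "u = u1@u2" "v = v1@v2" "run T1 p' u1 v1 f" "run T2 i u2 v2 q" by blast
      then show ?thesis using t1(2)
        by (intro bexI[of _ f] bexI[of _ i] exI[of _ "ol a @ u1"] exI[of _ u2] exI[of _ "ol b @ v1"] exI[of _ v2])
           (auto intro: run.run_cons)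
    next
      case br
      from ODD[of i u v y] run_cons(2) br obtain q' where "y = od q'" "run T2 i u v q'" by blast
      then have "q' = q" using run_cons(5) unfolding od_def by simp
      then show ?thesis using br \<open>run T2 i u v q'\<close>
        by (intro bexI[of _ p] bexI[of _ i] exI[of _ "[]"] exI[of _ u] exI[of _ "[]"] exI[of _ v])
           (auto intro: run.run_nil)
    qed
  qed
  have "acc I F T = pair_concat A B"
  proof
    show "acc I F T \<subseteq> pair_concat A B"
    proof
      fix x assume "x \<in> acc I F T"
      then obtain u v p q where x: "x = (u,v)" and p: "p \<in> I" and q: "q \<in> F" and r: "run T p u v q"
        unfolding acc_def by auto
      obtain p1 where p1: "p1 \<in> I1" "p = ev p1" using p unfolding I_def by auto
      obtain q1 where q1: "q1 \<in> F2" "q = od q1" using q unfolding F_def by auto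
      from EV[OF r p1(2) q1(2)] obtain f i u1 u2 v1 v2 where
        "f \<in> F1" "i \<in> I2" "u = u1@u2" "v = v1@v2" "run T1 p1 u1 v1 f" "run T2 i u2 v2 q1" by blast
      then show "x \<in> pair_concat A B" unfolding pair_concat_def A B acc_def x using p1 q1 by blast
    qed
    show "pair_concat A B \<subseteq> acc I F T"
    proof
      fix x assume "x \<in> pair_concat A B"
      then obtain u1 u2 v1 v2 where x: "x = (u1@u2, v1@v2)" and "(u1,v1) \<in> A" "(u2,v2) \<in> B"
        unfolding pair_concat_def by blast
      then obtain p1 f i q where
        "p1 \<in> I1" "f \<in> F1" "run T1 p1 u1 v1 f" "i \<in> I2" "q \<in> F2" "run T2 i u2 v2 q"
        unfolding A B acc_def by blast
      have a: "run T (ev p1) u1 v1 (ev f)" by (rule run_mono[OF run_map[OF \<open>run T1 p1 u1 v1 f\<close>]]) (auto simp: T_def)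
      have b: "run T (od i) u2 v2 (od q)" by (rule run_mono[OF run_map[OF \<open>run T2 i u2 v2 q\<close>]]) (auto simp: T_def)
      have "(ev f, (None,None), od i) \<in> T" proof -
        have "(ev f, (None,None), od i) \<in> Br" unfolding Br_def using \<open>f \<in> F1\<close> \<open>i \<in> I2\<close>
          by (auto intro!: image_eqI[where x="(f,i)"])
        then show ?thesis unfolding T_def by blast
      qed
      from run_cons[OF this b] have "run T (ev f) u2 v2 (od q)" by simp
      from run_append[OF a this] show "x \<in> acc I F T"
        unfolding acc_def I_def F_def x using \<open>p1 \<in> I1\<close> \<open>q \<in> F2\<close> by blast
    qed
  qed
  moreover have "finite I" "finite F" "finite T" using f1 f2 unfolding I_def F_def T_def Br_def
    by (auto intro: finite_mapT)
  ultimately show ?thesis unfolding aut_rep_def by blast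
qed

lemma star_append: "(u1,v1) \<in> pair_star A \<Longrightarrow> (u2,v2) \<in> pair_star A \<Longrightarrow> (u1@u2, v1@v2) \<in> pair_star A"
proof (induction u1 v1 rule: pair_star.induct)
  case star_empty then show ?case by simp
next
  case (star_step u1 v1 u2' v2')
  then show ?case using pair_star.star_step[of u1 v1 A "u2'@u2" "v2'@v2"] by simp
qed

lemma aut_star:
  assumes "aut_rep (A :: ('a list \<times> 'b list) set)" shows "aut_rep (pair_star A)"
proof -
  obtain I1 F1 and T1 :: "('a,'b) trans" where f1: "finite I1" "finite F1" "finite T1" and A: "A = acc I1 F1 T1"
    using assms(1) unfolding aut_rep_def by blast
  define T :: "('a,'b) trans" where "T = mapT Suc T1 \<union> (\<lambda>i. (0,(None,None),Suc i)) ` I1 \<union> (\<lambda>f. (Suc f,(None,None),0)) ` F1"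
  have M: "run T x u v y \<Longrightarrow> y = 0 \<Longrightarrow> (x = 0 \<longrightarrow> (u,v) \<in> pair_star A) \<and>
     (\<forall>p. x = Suc p \<longrightarrow> (\<exists>f\<in>F1. \<exists>u1 u2 v1 v2. u = u1@u2 \<and> v = v1@v2 \<and> run T1 p u1 v1 f \<and> (u2,v2) \<in> pair_star A))"
    for x u v y
  proof (induction rule: run.induct)
    case (run_nil x) then show ?case by (auto intro: pair_star.star_empty)
  next
    case (run_cons x a b x' u v y)
    note IH = run_cons.IH[OF run_cons(4)]
    from run_cons(1) consider (t1) p p' where "x = Suc p" "x' = Suc p'" "(p,(a,b),p') \<in> T1"
      | (st) i where "x = 0" "i \<in> I1" "x' = Suc i" "a = None" "b = None"
      | (en) f where "x = Suc f" "f \<in> F1" "x' = 0" "a = None" "b = None"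
      unfolding T_def by (auto simp: mapT_iff)
    then show ?case
    proof cases
      case t1
      from IH t1(2) obtain f u1 u2 v1 v2 where
        "f \<in> F1" "u = u1@u2" "v = v1@v2" "run T1 p' u1 v1 f" "(u2,v2) \<in> pair_star A" by blast
      have r: "run T1 p (ol a @ u1) (ol b @ v1) f" using run.run_cons[OF t1(3) \<open>run T1 p' u1 v1 f\<close>] .
      have e: "ol a @ u = (ol a @ u1) @ u2" "ol b @ v = (ol b @ v1) @ v2" using \<open>u = u1@u2\<close> \<open>v = v1@v2\<close> by simp_all
      show ?thesis
      proof (intro conjI allI impI)
        show "x = 0 \<Longrightarrow> (ol a @ u, ol b @ v) \<in> pair_star A" using t1(1) by simp
        fix p0 assume "x = Suc p0"
        then have "p0 = p" using t1(1) by simp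
        then show "\<exists>f\<in>F1. \<exists>u1 u2 v1 v2. ol a @ u = u1 @ u2 \<and> ol b @ v = v1 @ v2 \<and> run T1 p0 u1 v1 f \<and> (u2, v2) \<in> pair_star A"
          using e r \<open>f \<in> F1\<close> \<open>(u2,v2) \<in> pair_star A\<close> by blast
      qed
    next
      case st
      from IH st(3) obtain f u1 u2 v1 v2 where
        "f \<in> F1" "u = u1@u2" "v = v1@v2" "run T1 i u1 v1 f" "(u2,v2) \<in> pair_star A" by blast
      then have "(u1,v1) \<in> A" using A st(2) unfolding acc_def by blast
      then have "(u,v) \<in> pair_star A" using \<open>(u2,v2) \<in> pair_star A\<close> \<open>u = u1@u2\<close> \<open>v = v1@v2\<close>
        by (auto intro: pair_star.star_step)
      then show ?thesis using st by simp
    next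
      case en
      from IH en(3) have "(u,v) \<in> pair_star A" by simp
      show ?thesis
      proof (intro conjI allI impI)
        show "x = 0 \<Longrightarrow> (ol a @ u, ol b @ v) \<in> pair_star A" using en(1) by simp
        fix p0 assume "x = Suc p0"
        then have "p0 = f" using en(1) by simp
        have "ol a @ u = [] @ u" "ol b @ v = [] @ v" using en by simp_all
        then show "\<exists>f\<in>F1. \<exists>u1 u2 v1 v2. ol a @ u = u1 @ u2 \<and> ol b @ v = v1 @ v2 \<and> run T1 p0 u1 v1 f \<and> (u2, v2) \<in> pair_star A"
          using \<open>p0 = f\<close> en(2) run.run_nil[of T1 f] \<open>(u,v) \<in> pair_star A\<close> by blast
      qed
    qed
  qed
  have "acc {0} {0} T = pair_star A"
  proof
    show "acc {0} {0} T \<subseteq> pair_star A"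
      unfolding acc_def using M by blast
    show "pair_star A \<subseteq> acc {0} {0} T"
    proof
      fix x assume "x \<in> pair_star A"
      then obtain u v where x: "x = (u,v)" "(u,v) \<in> pair_star A" by (cases x) auto
      have "run T 0 u v 0" using x(2)
      proof (induction u v rule: pair_star.induct)
        case star_empty then show ?case by (rule run.run_nil)
      next
        case (star_step u1 v1 u2 v2)
        then obtain i f where "i \<in> I1" "f \<in> F1" "run T1 i u1 v1 f" using A unfolding acc_def by blast
        have a: "run T (Suc i) u1 v1 (Suc f)" by (rule run_mono[OF run_map[OF \<open>run T1 i u1 v1 f\<close>]]) (auto simp: T_def)
        have "(Suc f, (None,None), 0) \<in> T" using \<open>f \<in> F1\<close> unfolding T_def by blast
        from run_cons[OF this star_step.IH] have "run T (Suc f) u2 v2 0" by simp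
        from run_append[OF a this] have "run T (Suc i) (u1@u2) (v1@v2) 0" .
        moreover have "(0, (None,None), Suc i) \<in> T" using \<open>i \<in> I1\<close> unfolding T_def by blast
        ultimately show ?case using run_cons by fastforce
      qed
      then show "x \<in> acc {0} {0} T" unfolding acc_def x by blast
    qed
  qed
  moreover have "finite T" using f1 unfolding T_def by (auto intro: finite_mapT)
  ultimately show ?thesis unfolding aut_rep_def by (metis finite.emptyI finite_insert)
qed


lemma pair_concat_single: "pair_concat {(a,b)} {(c,d)} = {(a@c,b@d)}"
  unfolding pair_concat_def by auto

lemma aut_single: "aut_rep {(x::'a list, y::'b list)}"
proof (induction x)
  case Nil
  show ?case
  proof (induction y)
    case Nil
    show ?case using aut_atom[of None None] by simp
  next
    case (Cons b y)
    have "aut_rep (pair_concat {([]::'a list,[b])} {([],y)})"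
      using aut_concat[OF aut_atom[of None "Some b"] Cons] by simp
    then show ?case by (simp add: pair_concat_single)
  qed
next
  case (Cons a x)
  have "aut_rep (pair_concat {([a],[]::'b list)} {(x,y)})"
    using aut_concat[OF aut_atom[of "Some a" None] Cons] by simp
  then show ?case by (simp add: pair_concat_single)
qed

lemma aut_finite: "finite S \<Longrightarrow> aut_rep S"
proof (induction rule: finite_induct)
  case empty then show ?case by (rule aut_empty)
next
  case (insert x S)
  obtain a b where "x = (a,b)" by (cases x)
  then have "insert x S = {(a,b)} \<union> S" by simp
  then show ?case using aut_union[OF aut_single insert(3)] by simp
qed

lemma rational_aut: "R \<in> rational_sets \<Longrightarrow> aut_rep R"
  by (induction rule: rational_sets.induct)
     (auto intro: aut_finite aut_union aut_concat aut_star)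


inductive der :: "(nat \<times> (nat + 'a) list) set \<Rightarrow> (nat + 'a) list \<Rightarrow> 'a list \<Rightarrow> bool"
  for P where
  der_nil: "der P [] []"
| der_tm: "der P \<alpha> w \<Longrightarrow> der P (Inr a # \<alpha>) (a # w)"
| der_nt: "(A, rhs) \<in> P \<Longrightarrow> der P rhs w1 \<Longrightarrow> der P \<alpha> w2 \<Longrightarrow> der P (Inl A # \<alpha>) (w1 @ w2)"

lemma der_append_iff: "der P (\<alpha> @ \<beta>) w \<longleftrightarrow> (\<exists>w1 w2. w = w1 @ w2 \<and> der P \<alpha> w1 \<and> der P \<beta> w2)"
proof (induction \<alpha> arbitrary: w)
  case Nil
  then show ?case by (auto intro: der_nil elim: der.cases)
next
  case (Cons x \<alpha>)
  show ?case
  proof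
    assume "der P ((x # \<alpha>) @ \<beta>) w"
    then show "\<exists>w1 w2. w = w1 @ w2 \<and> der P (x # \<alpha>) w1 \<and> der P \<beta> w2"
    proof (cases rule: der.cases)
      case (der_tm \<gamma> w' a)
      then obtain w1 w2 where "w' = w1 @ w2" "der P \<alpha> w1" "der P \<beta> w2" using Cons.IH by auto
      then have "w = (a # w1) @ w2 \<and> der P (x # \<alpha>) (a # w1) \<and> der P \<beta> w2" using der_tm by (auto intro: der.der_tm)
      then show ?thesis by blast
    next
      case (der_nt A rhs w1 \<gamma> w2)
      then obtain w3 w4 where "w2 = w3 @ w4" "der P \<alpha> w3" "der P \<beta> w4" using Cons.IH by auto
      then have "w = (w1 @ w3) @ w4 \<and> der P (x # \<alpha>) (w1 @ w3) \<and> der P \<beta> w4" using der_nt by (auto intro: der.der_nt)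
      then show ?thesis by blast
    qed simp
  next
    assume "\<exists>w1 w2. w = w1 @ w2 \<and> der P (x # \<alpha>) w1 \<and> der P \<beta> w2"
    then obtain w1 w2 where w: "w = w1 @ w2" "der P (x # \<alpha>) w1" "der P \<beta> w2" by blast
    from w(2) show "der P ((x # \<alpha>) @ \<beta>) w"
    proof (cases rule: der.cases)
      case (der_tm w' a)
      then have "der P (\<alpha> @ \<beta>) (w' @ w2)" using Cons.IH w(3) by blast
      then show ?thesis using der_tm w(1) by (auto intro: der.der_tm)
    next
      case (der_nt A rhs w3 w4)
      then have "der P (\<alpha> @ \<beta>) (w4 @ w2)" using Cons.IH w(3) by blast
      then show ?thesis using der_nt w(1) der.der_nt[of A rhs P w3 "\<alpha> @ \<beta>" "w4 @ w2"] by simp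
    qed
  qed
qed

lemma der_map: "der P (map Inr w) w"
  by (induction w) (auto intro: der.intros)

lemma steps_der: "(cfg_step P)\<^sup>*\<^sup>* \<alpha> (map Inr w) \<Longrightarrow> der P \<alpha> w"
proof (induction rule: converse_rtranclp_induct)
  case base then show ?case by (rule der_map)
next
  case (step \<alpha> \<beta>)
  from step(1) obtain A rhs u v where "(A,rhs) \<in> P" "\<alpha> = u @ [Inl A] @ v" "\<beta> = u @ rhs @ v"
    by (auto elim: cfg_step.cases)
  with step(3) obtain w1 w2 w3 where "w = w1 @ w2 @ w3" "der P u w1" "der P rhs w2" "der P v w3"
    by (auto simp: der_append_iff)
  then have "der P (Inl A # v) (w2 @ w3)" using \<open>(A,rhs) \<in> P\<close> by (auto intro: der.der_nt)
  then show ?case using \<open>\<alpha> = u @ [Inl A] @ v\<close> \<open>w = w1 @ w2 @ w3\<close> \<open>der P u w1\<close>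
    by (auto simp: der_append_iff)
qed

lemma step_cong: "cfg_step P \<alpha> \<beta> \<Longrightarrow> cfg_step P (x @ \<alpha> @ y) (x @ \<beta> @ y)"
proof (induction rule: cfg_step.induct)
  case (1 A rhs u v)
  then show ?case using cfg_step.intros[of A rhs P "x @ u" "v @ y"] by simp
qed

lemma steps_cong: "(cfg_step P)\<^sup>*\<^sup>* \<alpha> \<beta> \<Longrightarrow> (cfg_step P)\<^sup>*\<^sup>* (x @ \<alpha> @ y) (x @ \<beta> @ y)"
proof (induction rule: rtranclp_induct)
  case base then show ?case by simp
next
  case (step b c)
  then show ?case using step_cong[OF step(2), of x y] by (simp add: rtranclp.rtrancl_into_rtrancl)
qed

lemma der_steps: "der P \<alpha> w \<Longrightarrow> (cfg_step P)\<^sup>*\<^sup>* \<alpha> (map Inr w)"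
proof (induction rule: der.induct)
  case der_nil then show ?case by simp
next
  case (der_tm \<alpha> w a)
  then show ?case using steps_cong[OF der_tm(2), of "[Inr a]" "[]"] by simp
next
  case (der_nt A rhs w1 \<alpha> w2)
  have "cfg_step P ([] @ [Inl A] @ \<alpha>) ([] @ rhs @ \<alpha>)" using der_nt(1) by (rule cfg_step.intros)
  then have s1: "cfg_step P (Inl A # \<alpha>) (rhs @ \<alpha>)" by simp
  have s2: "(cfg_step P)\<^sup>*\<^sup>* (rhs @ \<alpha>) (map Inr w1 @ \<alpha>)"
    using steps_cong[OF der_nt(4), of "[]" \<alpha>] by simp
  have s3: "(cfg_step P)\<^sup>*\<^sup>* (map Inr w1 @ \<alpha>) (map Inr w1 @ map Inr w2)"
    using steps_cong[OF der_nt(5), of "map Inr w1" "[]"] by simp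
  show ?case using s1 s2 s3 by (simp add: converse_rtranclp_into_rtranclp rtranclp_trans)
qed

lemma cfg_lang_der: "w \<in> cfg_lang P S \<longleftrightarrow> der P [Inl S] w"
  unfolding cfg_lang_def using steps_der der_steps by blast


definition Mc :: "nat \<Rightarrow> nat" where "Mc N = 2^N + 1"
definition Kc :: "nat \<Rightarrow> nat" where "Kc N = 2^N + 1 + N * Mc N"
definition bnd :: "nat \<Rightarrow> nat \<Rightarrow> nat" where "bnd N n = (if n = 0 then 2^N else Kc N * (2*n - 1))"

lemma bnd_Suc: "bnd N (Suc n) = Kc N * (2*n + 1)"
  unfolding bnd_def by simp

lemma Kc_ge: "N * Mc N \<le> Kc N" "2^N \<le> Kc N" "1 \<le> Kc N"
  unfolding Kc_def by simp_all

lemma bnd_ge_Kc: "n \<noteq> 0 \<Longrightarrow> Kc N \<le> bnd N n"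
  by (cases n) (auto simp: bnd_Suc)

lemma arith1: assumes "m < n" shows "1 + bnd N m + N * Mc N \<le> bnd N n"
proof (cases m)
  case 0
  then have "1 + bnd N m + N * Mc N = Kc N" unfolding bnd_def Kc_def by simp
  then show ?thesis using bnd_ge_Kc[of n N] assms by simp
next
  case (Suc m')
  obtain n' where n: "n = Suc n'" using assms by (cases n) auto
  have "m' + 1 \<le> n'" using assms Suc n by simp
  then have "Kc N * (2*m' + 1) + 2 * Kc N \<le> Kc N * (2*n' + 1)"
    using mult_le_mono2[of "2*m'+3" "2*n'+1" "Kc N"] by (simp add: algebra_simps)
  moreover have "1 + N * Mc N \<le> 2 * Kc N" using Kc_ge[of N] by simp
  ultimately show ?thesis using Suc n by (simp add: bnd_Suc)
qed

lemma arith2: assumes "m1 \<noteq> 0" "m2 \<noteq> 0" shows "bnd N m1 + bnd N m2 + N * Mc N \<le> bnd N (m1 + m2)"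
proof -
  obtain a b where ab: "m1 = Suc a" "m2 = Suc b" using assms by (cases m1; cases m2) auto
  have "bnd N m1 + bnd N m2 = Kc N * (2*a + 1) + Kc N * (2*b+1)" using ab by (simp add: bnd_Suc)
  also have "... = Kc N * (2*(a+b+1) + 1) - Kc N" by (simp add: algebra_simps)
  finally show ?thesis using ab Kc_ge[of N] by (simp add: bnd_Suc algebra_simps)
qed

lemma bnd_le: "bnd N n \<le> 2 * Kc N * (n + 1)"
proof (cases n)
  case 0 then show ?thesis using Kc_ge[of N] by (simp add: bnd_def)
next
  case (Suc n') then show ?thesis by (simp add: bnd_Suc algebra_simps)
qed



lemma funpow_chain: fixes \<Phi> :: "'x set \<Rightarrow> 'x set" assumes "mono \<Phi>" shows "(\<Phi>^^k) {} \<subseteq> (\<Phi>^^(Suc k)) {}"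
proof (induction k)
  case 0 then show ?case by simp
next
  case (Suc k) then show ?case using monoD[OF assms] by simp
qed

lemma funpow_le: fixes \<Phi> :: "'x set \<Rightarrow> 'x set" assumes "mono \<Phi>" "k \<le> m" shows "(\<Phi>^^k) {} \<subseteq> (\<Phi>^^m) {}"
  using lift_Suc_mono_le[of "\<lambda>k. (\<Phi>^^k) {}", OF funpow_chain[OF assms(1)] assms(2)] .

lemma funpow_stab:
  fixes \<Phi> :: "'x set \<Rightarrow> 'x set"
  assumes mono: "mono \<Phi>" and U: "\<And>S. \<Phi> S \<subseteq> U" and fin: "finite U"
  shows "(\<Phi>^^k) {} \<subseteq> (\<Phi>^^(card U)) {}"
proof (cases "k \<le> card U")
  case True then show ?thesis using funpow_le[OF mono] by blast
next
  case False
  define H where "H = (\<lambda>k. (\<Phi>^^k) {})"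
  have HU: "H j \<subseteq> U" for j unfolding H_def by (cases j) (auto intro: U[THEN subsetD])
  have finH: "finite (H j)" for j using HU fin finite_subset by blast
  have "\<exists>j \<le> card U. H (Suc j) = H j"
  proof (rule ccontr)
    assume "\<not> ?thesis"
    then have ne: "j \<le> card U \<Longrightarrow> H (Suc j) \<noteq> H j" for j by blast
    have "j \<le> card U + 1 \<Longrightarrow> j \<le> card (H j)" for j
    proof (induction j)
      case 0 then show ?case by simp
    next
      case (Suc j)
      have "H j \<subset> H (Suc j)" using funpow_chain[OF mono, of j] ne[of j] Suc.prems unfolding H_def by auto
      then have "card (H j) < card (H (Suc j))" using finH psubset_card_mono by blast
      then show ?case using Suc by simp
    qed
    then have "card U + 1 \<le> card (H (card U + 1))" by simp
    moreover have "card (H (card U + 1)) \<le> card U" using HU fin card_mono by blast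
    ultimately show False by simp
  qed
  then obtain j where j: "j \<le> card U" "H (Suc j) = H j" by blast
  have "H (j + i) = H j" for i
  proof (induction i)
    case 0 then show ?case by simp
  next
    case (Suc i)
    have "H (j + Suc i) = \<Phi> (H (j + i))" unfolding H_def by simp
    also have "... = \<Phi> (H j)" using Suc by simp
    also have "... = H (Suc j)" unfolding H_def by simp
    finally show ?case using j(2) by simp
  qed
  from this[of "k - j"] have "H k = H j" using False j(1) by simp
  then show ?thesis using funpow_le[OF mono j(1)] unfolding H_def by simp
qed


lemma run_split: "run T p u y q \<Longrightarrow> u = u1 @ u2 \<Longrightarrow> \<exists>r y1 y2. y = y1 @ y2 \<and> run T p u1 y1 r \<and> run T r u2 y2 q"
proof (induction arbitrary: u1 rule: run.induct)
  case (run_nil p) then show ?case by (auto intro: run.run_nil)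
next
  case (run_cons p a b p' u v q)
  show ?case
  proof (cases a)
    case None
    then have "u = u1 @ u2" using run_cons.prems by simp
    from run_cons.IH[OF this] obtain r y1 y2 where "v = y1 @ y2" "run T p' u1 y1 r" "run T r u2 y2 q" by blast
    moreover have "run T p (ol a @ u1) (ol b @ y1) r" using run.run_cons[OF run_cons(1) \<open>run T p' u1 y1 r\<close>] .
    ultimately show ?thesis using None by (intro exI[of _ r] exI[of _ "ol b @ y1"] exI[of _ y2]) simp
  next
    case (Some c)
    show ?thesis
    proof (cases u1)
      case Nil
      then show ?thesis using run_cons.prems run.run_cons[OF run_cons(1,2)]
        by (intro exI[of _ p] exI[of _ "[]"] exI[of _ "ol b @ v"]) (auto intro: run.run_nil)
    next
      case (Cons c' u1')
      then have "u = u1' @ u2" using run_cons.prems Some by simp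
      from run_cons.IH[OF this] obtain r y1 y2 where "v = y1 @ y2" "run T p' u1' y1 r" "run T r u2 y2 q" by blast
      moreover have "run T p (ol a @ u1') (ol b @ y1) r" using run.run_cons[OF run_cons(1) \<open>run T p' u1' y1 r\<close>] .
      moreover have "ol a @ u1' = u1" using Cons Some run_cons.prems by simp
      ultimately show ?thesis by (intro exI[of _ r] exI[of _ "ol b @ y1"] exI[of _ y2]) simp
    qed
  qed
qed

locale pump =
  fixes P :: "(nat \<times> (nat + 'a) list) set" and T :: "('a,'b) trans"
    and Q :: "nat set" and Al :: "(nat + 'a) list set"
  assumes finQ: "finite Q" and finAl: "finite Al"
    and closedQ: "\<And>p l q. (p,l,q) \<in> T \<Longrightarrow> p \<in> Q \<Longrightarrow> q \<in> Q"
    and closed_tm: "\<And>a \<beta>. Inr a # \<beta> \<in> Al \<Longrightarrow> \<beta> \<in> Al"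
    and closed_nt: "\<And>A \<beta>. Inl A # \<beta> \<in> Al \<Longrightarrow> \<beta> \<in> Al"
    and closed_rhs: "\<And>A \<beta> rhs. Inl A # \<beta> \<in> Al \<Longrightarrow> (A,rhs) \<in> P \<Longrightarrow> rhs \<in> Al"
begin

lemma runQ: "run T p u v q \<Longrightarrow> p \<in> Q \<Longrightarrow> q \<in> Q"
  by (induction rule: run.induct) (auto intro: closedQ)

definition Ty :: "((nat + 'a) list \<times> nat \<times> nat) set" where "Ty = Al \<times> Q \<times> Q"

lemma finTy: "finite Ty" unfolding Ty_def using finQ finAl by simp

abbreviation "N \<equiv> card Ty"

definition Phi0 :: "((nat + 'a) list \<times> nat \<times> nat) set \<Rightarrow> ((nat + 'a) list \<times> nat \<times> nat) set" where
  "Phi0 S = {(\<alpha>,p,q). (\<alpha>,p,q) \<in> Ty \<and> ((\<alpha> = [] \<and> run T p [] [] q)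
     \<or> (\<exists>a \<beta> r. \<alpha> = Inr a # \<beta> \<and> run T p [a] [] r \<and> (\<beta>,r,q) \<in> S)
     \<or> (\<exists>A \<beta> rhs r. \<alpha> = Inl A # \<beta> \<and> (A,rhs) \<in> P \<and> (rhs,p,r) \<in> S \<and> (\<beta>,r,q) \<in> S))}"

lemma mono_Phi0: "mono Phi0"
  unfolding mono_def Phi0_def by blast

lemma Phi0_Ty: "Phi0 S \<subseteq> Ty" unfolding Phi0_def by blast

lemma eps_a: "(\<alpha>,p,q) \<in> (Phi0^^k) {} \<Longrightarrow> \<exists>u. der P \<alpha> u \<and> run T p u [] q \<and> length u \<le> 2^k"
proof (induction k arbitrary: \<alpha> p q)
  case 0 then show ?case by simp
next
  case (Suc k)
  then have "(\<alpha>,p,q) \<in> Phi0 ((Phi0^^k) {})" by simp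
  then consider (nil) "\<alpha> = []" "run T p [] [] q"
    | (tm) a \<beta> r where "\<alpha> = Inr a # \<beta>" "run T p [a] [] r" "(\<beta>,r,q) \<in> (Phi0^^k) {}"
    | (nt) A \<beta> rhs r where "\<alpha> = Inl A # \<beta>" "(A,rhs) \<in> P" "(rhs,p,r) \<in> (Phi0^^k) {}" "(\<beta>,r,q) \<in> (Phi0^^k) {}"
    unfolding Phi0_def by blast
  then show ?case
  proof cases
    case nil then show ?thesis by (intro exI[of _ "[]"]) (auto intro: der.der_nil)
  next
    case tm
    from Suc.IH[OF tm(3)] obtain u where "der P \<beta> u" "run T r u [] q" "length u \<le> 2^k" by blast
    moreover have "run T p ([a] @ u) ([] @ []) q" using run_append tm(2) \<open>run T r u [] q\<close> by blast
    moreover have "Suc (length u) \<le> 2 * 2^k"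
    proof -
      have "(1::nat) \<le> 2^k" using one_le_power[of "2::nat" k] by simp
      then show ?thesis using \<open>length u \<le> 2^k\<close> by linarith
    qed
    ultimately show ?thesis using tm(1) by (intro exI[of _ "a # u"]) (auto intro: der.der_tm)
  next
    case nt
    from Suc.IH[OF nt(3)] obtain u1 where "der P rhs u1" "run T p u1 [] r" "length u1 \<le> 2^k" by blast
    moreover from Suc.IH[OF nt(4)] obtain u2 where "der P \<beta> u2" "run T r u2 [] q" "length u2 \<le> 2^k" by blast
    moreover have "run T p (u1 @ u2) ([] @ []) q" using run_append calculation by blast
    ultimately show ?thesis using nt(1,2) by (intro exI[of _ "u1 @ u2"]) (auto intro: der.der_nt)
  qed
qed

lemma eps_b: "der P \<alpha> u \<Longrightarrow> run T p u [] q \<Longrightarrow> (\<alpha>,p,q) \<in> Ty \<Longrightarrow> \<exists>k. (\<alpha>,p,q) \<in> (Phi0^^k) {}"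
proof (induction arbitrary: p q rule: der.induct)
  case der_nil
  then have "(([]::(nat+'a) list),p,q) \<in> Phi0 {}" unfolding Phi0_def by blast
  then show ?case by (intro exI[of _ 1]) simp
next
  case (der_tm \<alpha> w a)
  from run_split[OF der_tm(3), of "[a]" w] obtain r y1 y2 where
    "[] = y1 @ y2" "run T p [a] y1 r" "run T r w y2 q" by auto
  then have r: "run T p [a] [] r" "run T r w [] q" by auto
  have "r \<in> Q" using runQ[OF r(1)] der_tm(4) unfolding Ty_def by auto
  moreover have "\<alpha> \<in> Al" using closed_tm der_tm(4) unfolding Ty_def by auto
  ultimately have "(\<alpha>,r,q) \<in> Ty" using der_tm(4) unfolding Ty_def by auto
  from der_tm.IH[OF r(2) this] obtain k where "(\<alpha>,r,q) \<in> (Phi0^^k) {}" by blast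
  then have "(Inr a # \<alpha>,p,q) \<in> Phi0 ((Phi0^^k) {})" using r(1) der_tm(4) unfolding Phi0_def by blast
  then show ?case by (intro exI[of _ "Suc k"]) simp
next
  case (der_nt A rhs w1 \<alpha> w2)
  from run_split[OF der_nt(6), of w1 w2] obtain r y1 y2 where
    "[] = y1 @ y2" "run T p w1 y1 r" "run T r w2 y2 q" by auto
  then have r: "run T p w1 [] r" "run T r w2 [] q" by auto
  have "r \<in> Q" using runQ[OF r(1)] der_nt(7) unfolding Ty_def by auto
  have t1: "(rhs,p,r) \<in> Ty" using \<open>r \<in> Q\<close> der_nt(7) closed_rhs[OF _ der_nt(1)] unfolding Ty_def by auto
  have t2: "(\<alpha>,r,q) \<in> Ty" using \<open>r \<in> Q\<close> der_nt(7) closed_nt unfolding Ty_def by auto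
  from der_nt.IH(1)[OF r(1) t1] obtain k1 where k1: "(rhs,p,r) \<in> (Phi0^^k1) {}" by blast
  from der_nt.IH(2)[OF r(2) t2] obtain k2 where k2: "(\<alpha>,r,q) \<in> (Phi0^^k2) {}" by blast
  have "(rhs,p,r) \<in> (Phi0^^(max k1 k2)) {}" "(\<alpha>,r,q) \<in> (Phi0^^(max k1 k2)) {}"
    using k1 k2 funpow_le[OF mono_Phi0, of k1 "max k1 k2"] funpow_le[OF mono_Phi0, of k2 "max k1 k2"] by auto
  then have "(Inl A # \<alpha>,p,q) \<in> Phi0 ((Phi0^^(max k1 k2)) {})" using der_nt(1,7) unfolding Phi0_def by blast
  then show ?case by (intro exI[of _ "Suc (max k1 k2)"]) simp
qed

lemma eps: "(\<alpha>,p,q) \<in> Ty \<Longrightarrow> der P \<alpha> u \<Longrightarrow> run T p u [] q \<Longrightarrow>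
  \<exists>u'. der P \<alpha> u' \<and> run T p u' [] q \<and> length u' \<le> 2^N"
proof -
  assume a: "(\<alpha>,p,q) \<in> Ty" "der P \<alpha> u" "run T p u [] q"
  from eps_b[OF a(2,3,1)] obtain k where "(\<alpha>,p,q) \<in> (Phi0^^k) {}" by blast
  then have "(\<alpha>,p,q) \<in> (Phi0^^N) {}" using funpow_stab[OF mono_Phi0 Phi0_Ty finTy] by blast
  then show ?thesis using eps_a by blast
qed

end



context pump begin

definition B1 :: "'b list \<Rightarrow> ((nat + 'a) list \<times> nat \<times> nat) set" where
  "B1 y = {(\<alpha>,p,q). \<alpha> = [] \<and> run T p [] y q}"
definition B2 :: "'b list \<Rightarrow> ((nat + 'a) list \<times> nat \<times> nat) set" where
  "B2 y = {(\<alpha>,p,q). \<exists>a \<beta> r y1 y2 w. \<alpha> = Inr a # \<beta> \<and> y = y1 @ y2 \<and> y1 \<noteq> [] \<and> run T p [a] y1 r \<and> der P \<beta> w \<and> run T r w y2 q}"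
definition B3 :: "'b list \<Rightarrow> ((nat + 'a) list \<times> nat \<times> nat) set" where
  "B3 y = {(\<alpha>,p,q). \<exists>A \<beta> rhs r y1 y2 w1 w2. \<alpha> = Inl A # \<beta> \<and> (A,rhs) \<in> P \<and> y = y1 @ y2 \<and> y1 \<noteq> [] \<and> y2 \<noteq> [] \<and>
           der P rhs w1 \<and> run T p w1 y1 r \<and> der P \<beta> w2 \<and> run T r w2 y2 q}"
definition S1 :: "((nat + 'a) list \<times> nat \<times> nat) set \<Rightarrow> ((nat + 'a) list \<times> nat \<times> nat) set" where
  "S1 S = {(\<alpha>,p,q). \<exists>a \<beta> r. \<alpha> = Inr a # \<beta> \<and> run T p [a] [] r \<and> (\<beta>,r,q) \<in> S}"
definition S2 :: "((nat + 'a) list \<times> nat \<times> nat) set \<Rightarrow> ((nat + 'a) list \<times> nat \<times> nat) set" where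
  "S2 S = {(\<alpha>,p,q). \<exists>A \<beta> rhs r w1. \<alpha> = Inl A # \<beta> \<and> (A,rhs) \<in> P \<and> der P rhs w1 \<and> run T p w1 [] r \<and> (\<beta>,r,q) \<in> S}"
definition S3 :: "((nat + 'a) list \<times> nat \<times> nat) set \<Rightarrow> ((nat + 'a) list \<times> nat \<times> nat) set" where
  "S3 S = {(\<alpha>,p,q). \<exists>A \<beta> rhs r w2. \<alpha> = Inl A # \<beta> \<and> (A,rhs) \<in> P \<and> (rhs,p,r) \<in> S \<and> der P \<beta> w2 \<and> run T r w2 [] q}"

definition PhiY :: "'b list \<Rightarrow> ((nat + 'a) list \<times> nat \<times> nat) set \<Rightarrow> ((nat + 'a) list \<times> nat \<times> nat) set" where
  "PhiY y S = Ty \<inter> (B1 y \<union> B2 y \<union> B3 y \<union> S1 S \<union> S2 S \<union> S3 S)"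

lemma mono_PhiY: "mono (PhiY y)"
proof (rule monoI)
  fix S S' :: "((nat + 'a) list \<times> nat \<times> nat) set" assume "S \<subseteq> S'"
  then have "S1 S \<subseteq> S1 S'" "S2 S \<subseteq> S2 S'" "S3 S \<subseteq> S3 S'" unfolding S1_def S2_def S3_def by blast+
  then show "PhiY y S \<subseteq> PhiY y S'" unfolding PhiY_def by blast
qed

lemma PhiY_Ty: "PhiY y S \<subseteq> Ty" unfolding PhiY_def by blast

lemma main: "length y = n \<Longrightarrow> (\<alpha>,p,q) \<in> Ty \<Longrightarrow> der P \<alpha> u \<Longrightarrow> run T p u y q \<Longrightarrow>
  \<exists>u'. der P \<alpha> u' \<and> run T p u' y q \<and> length u' \<le> bnd N n"
proof (induction n arbitrary: y \<alpha> p q u rule: less_induct)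
  case (less n)
  show ?case
  proof (cases "n = 0")
    case True
    then have "y = []" using less.prems by simp
    then show ?thesis using eps[OF less.prems(2,3)] less.prems(4) True by (simp add: bnd_def)
  next
    case False
    then have yne: "y \<noteq> []" using less.prems(1) by auto
    have Mc1: "1 \<le> Mc N" "2^N \<le> Mc N" unfolding Mc_def by simp_all
    have A: "(\<alpha>',p',q') \<in> (PhiY y ^^ k) {} \<Longrightarrow>
       \<exists>u'. der P \<alpha>' u' \<and> run T p' u' y q' \<and> length u' + N * Mc N \<le> bnd N n + k * Mc N" for k \<alpha>' p' q'
    proof (induction k arbitrary: \<alpha>' p' q')
      case 0 thus ?case by simp
    next
      case (Suc k)
      then have mem: "(\<alpha>',p',q') \<in> PhiY y ((PhiY y ^^ k) {})" by simp
      then have "(\<alpha>',p',q') \<in> Ty" unfolding PhiY_def by blast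
      then have ty: "\<alpha>' \<in> Al" "p' \<in> Q" "q' \<in> Q" unfolding Ty_def by auto
      have memU: "(\<alpha>',p',q') \<in> B1 y \<or> (\<alpha>',p',q') \<in> B2 y \<or> (\<alpha>',p',q') \<in> B3 y \<or>
          (\<alpha>',p',q') \<in> S1 ((PhiY y ^^ k) {}) \<or> (\<alpha>',p',q') \<in> S2 ((PhiY y ^^ k) {}) \<or> (\<alpha>',p',q') \<in> S3 ((PhiY y ^^ k) {})"
        using mem unfolding PhiY_def by blast
      consider
        (c1) "\<alpha>' = []" "run T p' [] y q'"
      | (c2) a \<beta> r y1 y2 w where "\<alpha>' = Inr a # \<beta>" "y = y1 @ y2" "y1 \<noteq> []" "run T p' [a] y1 r" "der P \<beta> w" "run T r w y2 q'"
      | (c3) A \<beta> rhs r y1 y2 w1 w2 where "\<alpha>' = Inl A # \<beta>" "(A,rhs) \<in> P" "y = y1 @ y2" "y1 \<noteq> []" "y2 \<noteq> []"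
           "der P rhs w1" "run T p' w1 y1 r" "der P \<beta> w2" "run T r w2 y2 q'"
      | (c4) a \<beta> r where "\<alpha>' = Inr a # \<beta>" "run T p' [a] [] r" "(\<beta>,r,q') \<in> (PhiY y ^^ k) {}"
      | (c5) A \<beta> rhs r w1 where "\<alpha>' = Inl A # \<beta>" "(A,rhs) \<in> P" "der P rhs w1" "run T p' w1 [] r" "(\<beta>,r,q') \<in> (PhiY y ^^ k) {}"
      | (c6) A \<beta> rhs r w2 where "\<alpha>' = Inl A # \<beta>" "(A,rhs) \<in> P" "(rhs,p',r) \<in> (PhiY y ^^ k) {}" "der P \<beta> w2" "run T r w2 [] q'"
      proof -
        from memU show thesis
        proof (elim disjE)
          assume "(\<alpha>',p',q') \<in> B1 y" then show thesis using that(1) unfolding B1_def by blast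
        next
          assume "(\<alpha>',p',q') \<in> B2 y" then show thesis using that(2) unfolding B2_def by blast
        next
          assume "(\<alpha>',p',q') \<in> B3 y" then show thesis using that(3) unfolding B3_def by blast
        next
          assume "(\<alpha>',p',q') \<in> S1 ((PhiY y ^^ k) {})" then show thesis using that(4) unfolding S1_def by blast
        next
          assume "(\<alpha>',p',q') \<in> S2 ((PhiY y ^^ k) {})" then show thesis using that(5) unfolding S2_def by blast
        next
          assume "(\<alpha>',p',q') \<in> S3 ((PhiY y ^^ k) {})" then show thesis using that(6) unfolding S3_def by blast
        qed
      qed
      then show ?case
      proof cases
        case c1
        have "N * Mc N \<le> bnd N n" using Kc_ge(1)[of N] bnd_ge_Kc[OF False, of N] by linarith
        then show ?thesis using c1 by (intro exI[of _ "[]"]) (auto intro: der.der_nil)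
      next
        case c2
        have "r \<in> Q" using runQ[OF c2(4) ty(2)] .
        have tyb: "(\<beta>,r,q') \<in> Ty" using closed_tm c2(1) ty \<open>r \<in> Q\<close> unfolding Ty_def by auto
        have lt: "length y2 < n" using c2(2,3) less.prems(1) by (cases y1) auto
        from less.IH[OF lt refl tyb c2(5,6)] obtain w' where
          w': "der P \<beta> w'" "run T r w' y2 q'" "length w' \<le> bnd N (length y2)" by blast
        have "run T p' ([a] @ w') (y1 @ y2) q'" using run_append[OF c2(4) w'(2)] .
        moreover have "der P \<alpha>' (a # w')" using c2(1) w'(1) by (auto intro: der.der_tm)
        moreover have "length (a # w') + N * Mc N \<le> bnd N n + Suc k * Mc N"
          using arith1[OF lt, of N] w'(3) by simp
        ultimately show ?thesis using c2(2) by (intro exI[of _ "a # w'"]) simp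
      next
        case c3
        have "r \<in> Q" using runQ[OF c3(7) ty(2)] .
        have ty1: "(rhs,p',r) \<in> Ty" using closed_rhs c3(1,2) ty \<open>r \<in> Q\<close> unfolding Ty_def by auto
        have ty2: "(\<beta>,r,q') \<in> Ty" using closed_nt c3(1) ty \<open>r \<in> Q\<close> unfolding Ty_def by auto
        have lt1: "length y1 < n" using c3(3,5) less.prems(1) by (cases y2) auto
        have lt2: "length y2 < n" using c3(3,4) less.prems(1) by (cases y1) auto
        from less.IH[OF lt1 refl ty1 c3(6,7)] obtain w1' where
          w1: "der P rhs w1'" "run T p' w1' y1 r" "length w1' \<le> bnd N (length y1)" by blast
        from less.IH[OF lt2 refl ty2 c3(8,9)] obtain w2' where
          w2: "der P \<beta> w2'" "run T r w2' y2 q'" "length w2' \<le> bnd N (length y2)" by blast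
        have "run T p' (w1' @ w2') (y1 @ y2) q'" using run_append[OF w1(2) w2(2)] .
        moreover have "der P \<alpha>' (w1' @ w2')" using c3(1,2) w1(1) w2(1) by (auto intro: der.der_nt)
        moreover have "bnd N (length y1) + bnd N (length y2) + N * Mc N \<le> bnd N n"
          using arith2[of "length y1" "length y2" N] c3(3,4,5) less.prems(1) by simp
        then have "length (w1' @ w2') + N * Mc N \<le> bnd N n + Suc k * Mc N" using w1(3) w2(3) by simp
        ultimately show ?thesis using c3(3) by (intro exI[of _ "w1' @ w2'"]) simp
      next
        case c4
        from Suc.IH[OF c4(3)] obtain uc where
          uc: "der P \<beta> uc" "run T r uc y q'" "length uc + N * Mc N \<le> bnd N n + k * Mc N" by blast
        have "run T p' ([a] @ uc) ([] @ y) q'" using run_append[OF c4(2) uc(2)] .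
        moreover have "der P \<alpha>' (a # uc)" using c4(1) uc(1) by (auto intro: der.der_tm)
        moreover have "length (a # uc) + N * Mc N \<le> bnd N n + Suc k * Mc N" using uc(3) Mc1 by simp
        ultimately show ?thesis by (intro exI[of _ "a # uc"]) simp
      next
        case c5
        have "r \<in> Q" using runQ[OF c5(4) ty(2)] .
        have ty1: "(rhs,p',r) \<in> Ty" using closed_rhs c5(1,2) ty \<open>r \<in> Q\<close> unfolding Ty_def by auto
        from eps[OF ty1 c5(3,4)] obtain w1' where
          w1: "der P rhs w1'" "run T p' w1' [] r" "length w1' \<le> 2^N" by blast
        from Suc.IH[OF c5(5)] obtain uc where
          uc: "der P \<beta> uc" "run T r uc y q'" "length uc + N * Mc N \<le> bnd N n + k * Mc N" by blast
        have "run T p' (w1' @ uc) ([] @ y) q'" using run_append[OF w1(2) uc(2)] .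
        moreover have "der P \<alpha>' (w1' @ uc)" using c5(1,2) w1(1) uc(1) by (auto intro: der.der_nt)
        moreover have "length (w1' @ uc) + N * Mc N \<le> bnd N n + Suc k * Mc N" using uc(3) w1(3) Mc1 by simp
        ultimately show ?thesis by (intro exI[of _ "w1' @ uc"]) simp
      next
        case c6
        from Suc.IH[OF c6(3)] obtain uc where
          uc: "der P rhs uc" "run T p' uc y r" "length uc + N * Mc N \<le> bnd N n + k * Mc N" by blast
        have "r \<in> Q" using runQ[OF uc(2) ty(2)] .
        have ty2: "(\<beta>,r,q') \<in> Ty" using closed_nt c6(1) ty \<open>r \<in> Q\<close> unfolding Ty_def by auto
        from eps[OF ty2 c6(4,5)] obtain w2' where
          w2: "der P \<beta> w2'" "run T r w2' [] q'" "length w2' \<le> 2^N" by blast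
        have "run T p' (uc @ w2') (y @ []) q'" using run_append[OF uc(2) w2(2)] .
        moreover have "der P \<alpha>' (uc @ w2')" using c6(1,2) w2(1) uc(1) by (auto intro: der.der_nt)
        moreover have "length (uc @ w2') + N * Mc N \<le> bnd N n + Suc k * Mc N" using uc(3) w2(3) Mc1 by simp
        ultimately show ?thesis by (intro exI[of _ "uc @ w2'"]) simp
      qed
    qed
    have B: "der P \<alpha>' u' \<Longrightarrow> run T p' u' y q' \<Longrightarrow> (\<alpha>',p',q') \<in> Ty \<Longrightarrow> \<exists>k. (\<alpha>',p',q') \<in> (PhiY y ^^ k) {}"
      for \<alpha>' u' p' q'
    proof (induction arbitrary: p' q' rule: der.induct)
      case der_nil
      then have "(([]::(nat+'a) list),p',q') \<in> PhiY y {}" unfolding PhiY_def B1_def by blast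
      then show ?case by (intro exI[of _ 1]) simp
    next
      case (der_tm \<beta> w a)
      from run_split[OF der_tm(3), of "[a]" w] obtain r y1 y2 where
        r: "y = y1 @ y2" "run T p' [a] y1 r" "run T r w y2 q'" by auto
      have "r \<in> Q" using runQ[OF r(2)] der_tm(4) unfolding Ty_def by auto
      have tyb: "(\<beta>,r,q') \<in> Ty" using closed_tm der_tm(4) \<open>r \<in> Q\<close> unfolding Ty_def by auto
      show ?case
      proof (cases "y1 = []")
        case True
        then have "run T r w y q'" "run T p' [a] [] r" using r by auto
        from der_tm.IH[OF this(1) tyb] obtain k where "(\<beta>,r,q') \<in> (PhiY y ^^ k) {}" by blast
        then have "(Inr a # \<beta>,p',q') \<in> PhiY y ((PhiY y ^^ k) {})"
          using \<open>run T p' [a] [] r\<close> der_tm(4) unfolding PhiY_def S1_def by blast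
        then show ?thesis by (intro exI[of _ "Suc k"]) simp
      next
        case False
        then have "(Inr a # \<beta>,p',q') \<in> PhiY y {}"
          using r der_tm(1,4) False unfolding PhiY_def B2_def by blast
        then show ?thesis by (intro exI[of _ 1]) simp
      qed
    next
      case (der_nt A rhs w1 \<beta> w2)
      from run_split[OF der_nt(6), of w1 w2] obtain r y1 y2 where
        r: "y = y1 @ y2" "run T p' w1 y1 r" "run T r w2 y2 q'" by auto
      have "r \<in> Q" using runQ[OF r(2)] der_nt(7) unfolding Ty_def by auto
      have ty1: "(rhs,p',r) \<in> Ty" using \<open>r \<in> Q\<close> der_nt(7) closed_rhs[OF _ der_nt(1)] unfolding Ty_def by auto
      have ty2: "(\<beta>,r,q') \<in> Ty" using \<open>r \<in> Q\<close> der_nt(7) closed_nt unfolding Ty_def by auto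
      show ?case
      proof (cases "y1 = []")
        case True
        then have "run T r w2 y q'" "run T p' w1 [] r" using r by auto
        from der_nt.IH(2)[OF this(1) ty2] obtain k where "(\<beta>,r,q') \<in> (PhiY y ^^ k) {}" by blast
        then have "(Inl A # \<beta>,p',q') \<in> PhiY y ((PhiY y ^^ k) {})"
          using \<open>run T p' w1 [] r\<close> der_nt(1,2,7) unfolding PhiY_def S2_def by blast
        then show ?thesis by (intro exI[of _ "Suc k"]) simp
      next
        case False
        show ?thesis
        proof (cases "y2 = []")
          case True
          then have "run T p' w1 y r" "run T r w2 [] q'" using r by auto
          from der_nt.IH(1)[OF this(1) ty1] obtain k where "(rhs,p',r) \<in> (PhiY y ^^ k) {}" by blast
          then have "(Inl A # \<beta>,p',q') \<in> PhiY y ((PhiY y ^^ k) {})"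
            using \<open>run T r w2 [] q'\<close> der_nt(1,3,7) unfolding PhiY_def S3_def by blast
          then show ?thesis by (intro exI[of _ "Suc k"]) simp
        next
          case False2: False
          have "(Inl A # \<beta>,p',q') \<in> PhiY y {}"
            using r der_nt(1,2,3,7) False False2 unfolding PhiY_def B3_def by blast
          then show ?thesis by (intro exI[of _ 1]) simp
        qed
      qed
    qed
    from B[OF less.prems(3,4,2)] obtain k where "(\<alpha>,p,q) \<in> (PhiY y ^^ k) {}" by blast
    then have "(\<alpha>,p,q) \<in> (PhiY y ^^ N) {}" using funpow_stab[OF mono_PhiY PhiY_Ty finTy] by blast
    from A[OF this] obtain u' where u': "der P \<alpha> u'" "run T p u' y q" "length u' + N * Mc N \<le> bnd N n + N * Mc N"
      by blast
    from u'(3) have "length u' \<le> bnd N n" by linarith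
    with u'(1,2) show ?thesis by blast
  qed
qed

end



lemma finite_len_le: "finite {w :: ('a::finite) list. length w \<le> m}"
  using finite_lists_length_le[of "UNIV :: 'a set" m] by simp

lemma pimage_sub: "pimage f A \<subseteq> (\<lambda>u. the (f u)) ` A"
proof
  fix v assume "v \<in> pimage f A"
  then obtain u where "u \<in> A" "f u = Some v" unfolding pimage_def by blast
  then show "v \<in> (\<lambda>u. the (f u)) ` A" by (intro image_eqI[of _ _ u]) simp_all
qed

lemma finite_pimage: "finite A \<Longrightarrow> finite (pimage f A)"
  by (rule finite_subset[OF pimage_sub]) simp

lemma exp_transfer_lin:
  fixes \<gamma> \<gamma>' :: "nat \<Rightarrow> nat"
  assumes L: "L \<ge> 1" and le: "\<And>n. \<gamma> n \<le> \<gamma>' (L * (n + 1))" and g: "grows_exponentially \<gamma>"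
  shows "grows_exponentially \<gamma>'"
proof -
  from g obtain c :: real where c: "c > 1" and inf: "infinite {n. c ^ n \<le> real (\<gamma> n)}"
    unfolding grows_exponentially_def by blast
  define d where "d = c powr (1 / (2 * real L))"
  have "c powr 0 < c powr (1 / (2 * real L))" using c L by (intro powr_less_mono) auto
  then have d1: "d > 1" unfolding d_def using c by simp
  define Sn where "Sn = {n. c ^ n \<le> real (\<gamma> n)} - {0}"
  have infS: "infinite Sn" unfolding Sn_def using inf by simp
  have inj: "inj_on (\<lambda>n. L * (n + 1)) Sn" using L by (intro inj_onI) simp
  have sub: "(\<lambda>n. L * (n + 1)) ` Sn \<subseteq> {m. d ^ m \<le> real (\<gamma>' m)}"
  proof
    fix m assume "m \<in> (\<lambda>n. L * (n + 1)) ` Sn"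
    then obtain n where n: "n \<in> Sn" "m = L * (n + 1)" by blast
    have n1: "n \<ge> 1" "c ^ n \<le> real (\<gamma> n)" using n(1) unfolding Sn_def by auto
    have "d ^ m = d powr real m" using d1 by (simp add: powr_realpow)
    also have "\<dots> = c powr (1 / (2 * real L) * real m)" unfolding d_def by (simp add: powr_powr)
    also have "1 / (2 * real L) * real m = (real n + 1) / 2" using L n(2) by (simp add: field_simps)
    also have "c powr ((real n + 1) / 2) \<le> c powr (real n)" using c n1(1) by (intro powr_mono) auto
    also have "\<dots> = c ^ n" using c by (simp add: powr_realpow)
    also have "\<dots> \<le> real (\<gamma> n)" by (rule n1(2))
    also have "\<dots> \<le> real (\<gamma>' m)" using le[of n] n(2) by simp
    finally show "m \<in> {m. d ^ m \<le> real (\<gamma>' m)}" by simp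
  qed
  have "infinite ((\<lambda>n. L * (n + 1)) ` Sn)" using infS finite_imageD[OF _ inj] by blast
  then have "infinite {m. d ^ m \<le> real (\<gamma>' m)}" using infinite_super[OF sub] by blast
  then show ?thesis unfolding grows_exponentially_def using d1 by blast
qed

lemma exp_transfer_minus1:
  fixes \<gamma> \<gamma>' :: "nat \<Rightarrow> nat"
  assumes le: "\<And>n. \<gamma> n \<le> \<gamma>' n + 1" and g: "grows_exponentially \<gamma>"
  shows "grows_exponentially \<gamma>'"
proof -
  from g obtain c :: real where c: "c > 1" and inf: "infinite {n. c ^ n \<le> real (\<gamma> n)}"
    unfolding grows_exponentially_def by blast
  define d where "d = sqrt c"
  have d1: "d > 1" unfolding d_def using c by simp
  obtain m0 where m0: "2 < d ^ m0" using real_arch_pow[OF d1] by blast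
  have sub: "{n. c ^ n \<le> real (\<gamma> n)} - {..<m0} \<subseteq> {m. d ^ m \<le> real (\<gamma>' m)}"
  proof
    fix m assume m: "m \<in> {n. c ^ n \<le> real (\<gamma> n)} - {..<m0}"
    have "d ^ m0 \<le> d ^ m" using m d1 by (intro power_increasing) auto
    then have x2: "2 \<le> d ^ m" using m0 by simp
    have sq: "c ^ m = d ^ m * d ^ m" unfolding d_def using c
      by (simp add: power_mult_distrib[symmetric])
    have "2 * d ^ m \<le> d ^ m * d ^ m" using mult_right_mono[OF x2, of "d ^ m"] x2 by simp
    then have "d ^ m + 1 \<le> d ^ m * d ^ m" using x2 by linarith
    also have "\<dots> = c ^ m" using sq by simp
    also have "\<dots> \<le> real (\<gamma> m)" using m by simp
    also have "\<dots> \<le> real (\<gamma>' m) + 1" using le[of m] by simp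
    finally show "m \<in> {m. d ^ m \<le> real (\<gamma>' m)}" by simp
  qed
  have "infinite ({n. c ^ n \<le> real (\<gamma> n)} - {..<m0})" using inf by simp
  then have "infinite {m. d ^ m \<le> real (\<gamma>' m)}" using infinite_super[OF sub] by blast
  then show ?thesis unfolding grows_exponentially_def using d1 by blast
qed

lemma sexp_card:
  fixes t :: "('a::finite) list \<Rightarrow> ('b::finite) list option"
  assumes "X \<subseteq> dom t"
  shows "f_growth t X m \<le> f_growth (suffix_expansion t) X m + 1"
proof -
  define A where "A = X \<inter> {w. length w \<le> m}"
  have finA: "finite A" unfolding A_def by (rule finite_Int[OF disjI2[OF finite_len_le]])
  have "pimage t A \<subseteq> insert (the (t [])) (hd ` pimage (suffix_expansion t) A)"
  proof
    fix v assume "v \<in> pimage t A"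
    then obtain u where u: "u \<in> A" "t u = Some v" unfolding pimage_def by blast
    show "v \<in> insert (the (t [])) (hd ` pimage (suffix_expansion t) A)"
    proof (cases "u = []")
      case True then show ?thesis using u by simp
    next
      case False
      have "u \<in> dom t" using u(2) by blast
      then have "suffix_expansion t u = Some (map (\<lambda>i. the (t (drop i u))) [0..<length u])"
        unfolding suffix_expansion_def by simp
      moreover have "hd (map (\<lambda>i. the (t (drop i u))) [0..<length u]) = v"
        using False u(2) by (simp add: hd_map upt_conv_Cons)
      ultimately have "v \<in> hd ` pimage (suffix_expansion t) A"
        using u(1) unfolding pimage_def by (intro image_eqI[of _ _ "map (\<lambda>i. the (t (drop i u))) [0..<length u]"]) auto
      then show ?thesis by simp
    qed
  qed
  then have "card (pimage t A) \<le> card (insert (the (t [])) (hd ` pimage (suffix_expansion t) A))"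
    using finite_pimage[OF finA] by (intro card_mono) auto
  also have "\<dots> \<le> card (hd ` pimage (suffix_expansion t) A) + 1"
    using card_insert_le_m1 by (simp add: card_insert_if finite_pimage[OF finA])
  also have "\<dots> \<le> card (pimage (suffix_expansion t) A) + 1"
    using card_image_le[OF finite_pimage[OF finA]] by simp
  finally show ?thesis unfolding f_growth_def A_def .
qed


theorem proposition3:
  fixes t :: "('a::finite) list \<Rightarrow> ('b::finite) list option"
    and X :: "'a list set"
  assumes "rational_pfun t"
    and "suffix_closed (dom t)"
    and "X \<subseteq> dom t"
    and "context_free X"
    and "grows_exponentially (lang_growth (pimage t X))"
  shows "grows_exponentially (f_growth t X)
       \<and> grows_exponentially (f_growth (suffix_expansion t) X)"
proof -
  from assms(1) have "aut_rep (graph t)" unfolding rational_pfun_def by (rule rational_aut)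
  then obtain I F and T :: "('a,'b) trans" where fin: "finite I" "finite F" "finite T"
    and G: "graph t = acc I F T" unfolding aut_rep_def by blast
  from assms(4) obtain P S where finP: "finite P" and X: "X = cfg_lang P S"
    unfolding context_free_def by blast
  define Q where "Q = I \<union> fst ` T \<union> (snd \<circ> snd) ` T"
  define Al where "Al = {\<beta>. \<exists>A rhs. (A,rhs) \<in> P \<and> suffix \<beta> rhs} \<union> {\<beta>. suffix \<beta> [Inl S]}"
  have "pump P T Q Al"
  proof
    show "finite Q" using fin unfolding Q_def by simp
    have "Al \<subseteq> (\<Union>x\<in>P. set (suffixes (snd x))) \<union> set (suffixes [Inl S])"
    proof
      fix \<beta> assume "\<beta> \<in> Al"
      then consider (a) A rhs where "(A,rhs) \<in> P" "suffix \<beta> rhs" | (b) "suffix \<beta> [Inl S]"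
        unfolding Al_def by blast
      then show "\<beta> \<in> (\<Union>x\<in>P. set (suffixes (snd x))) \<union> set (suffixes [Inl S])"
      proof cases
        case a
        then have "\<beta> \<in> set (suffixes (snd (A,rhs)))" by simp
        then show ?thesis using a(1) by blast
      next
        case b
        then have "\<beta> \<in> set (suffixes [Inl S])" by (simp only: in_set_suffixes)
        then show ?thesis by blast
      qed
    qed
    moreover have "finite ((\<Union>x\<in>P. set (suffixes (snd x))) \<union> set (suffixes [Inl S]))"
      using finP by simp
    ultimately show "finite Al" by (rule finite_subset)
    show "q \<in> Q" if "(p,l,q) \<in> T" "p \<in> Q" for p l q
    proof -
      have "q = (snd \<circ> snd) (p,l,q)" by simp
      then show ?thesis using that(1) unfolding Q_def by blast
    qed
    show "\<beta> \<in> Al" if "Inr a # \<beta> \<in> Al" for a \<beta> using that unfolding Al_def by (blast dest: suffix_ConsD)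
    show "\<beta> \<in> Al" if "Inl A # \<beta> \<in> Al" for A \<beta> using that unfolding Al_def by (blast dest: suffix_ConsD)
    show "rhs \<in> Al" if "Inl A # \<beta> \<in> Al" "(A,rhs) \<in> P" for A \<beta> rhs
      using that(2) unfolding Al_def by blast
  qed
  then interpret pump P T Q Al .
  define L where "L = 2 * Kc (card Ty)"
  have short: "\<exists>u'\<in>X. t u' = Some v \<and> length u' \<le> L * (length v + 1)" if u: "u \<in> X" "t u = Some v" for u v
  proof -
    have "(u,v) \<in> graph t" using u(2) unfolding graph_def by simp
    then have "(u,v) \<in> acc I F T" using G by simp
    then obtain p q where pq: "p \<in> I" "q \<in> F" "run T p u v q" unfolding acc_def by blast
    have d: "der P [Inl S] u" using u(1) X cfg_lang_der by blast
    have pQ: "p \<in> Q" using pq unfolding Q_def by blast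
    have "[Inl S] \<in> Al" unfolding Al_def by simp
    then have ty: "([Inl S],p,q) \<in> Ty" unfolding Ty_def using pQ runQ[OF pq(3) pQ] by simp
    from main[OF refl ty d pq(3)] obtain u' where
      u': "der P [Inl S] u'" "run T p u' v q" "length u' \<le> bnd (card Ty) (length v)" by blast
    have "u' \<in> X" using u'(1) X cfg_lang_der by blast
    moreover have "(u',v) \<in> acc I F T" using u'(2) pq unfolding acc_def by blast
    then have "(u',v) \<in> graph t" using G by simp
    then have "t u' = Some v" unfolding graph_def by simp
    moreover have "length u' \<le> L * (length v + 1)"
      using u'(3) bnd_le[of "card Ty" "length v"] unfolding L_def by linarith
    ultimately show ?thesis by blast
  qed
  have L1: "L \<ge> 1" using Kc_ge(3)[of "card Ty"] unfolding L_def by simp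
  have le: "lang_growth (pimage t X) n \<le> f_growth t X (L * (n+1))" for n
  proof -
    have sub: "pimage t X \<inter> {v. length v \<le> n} \<subseteq> pimage t (X \<inter> {w. length w \<le> L * (n+1)})"
    proof
      fix v assume "v \<in> pimage t X \<inter> {v. length v \<le> n}"
      then obtain u where "u \<in> X" "t u = Some v" "length v \<le> n" unfolding pimage_def by blast
      with short obtain u' where u': "u' \<in> X" "t u' = Some v" "length u' \<le> L * (length v + 1)" by blast
      moreover have "L * (length v + 1) \<le> L * (n+1)" using \<open>length v \<le> n\<close> by simp
      ultimately have "length u' \<le> L * (n+1)" by (meson order_trans)
      then have "u' \<in> X \<inter> {w. length w \<le> L * (n+1)}" using u'(1) by blast
      then show "v \<in> pimage t (X \<inter> {w. length w \<le> L * (n+1)})" using u'(2) unfolding pimage_def by blast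
    qed
    have "finite (pimage t (X \<inter> {w. length w \<le> L * (n+1)}))"
      by (rule finite_pimage[OF finite_Int[OF disjI2[OF finite_len_le]]])
    from card_mono[OF this sub] show ?thesis unfolding lang_growth_def f_growth_def .
  qed
  have g1: "grows_exponentially (f_growth t X)" by (rule exp_transfer_lin[OF L1 le assms(5)])
  have g2: "grows_exponentially (f_growth (suffix_expansion t) X)"
    by (rule exp_transfer_minus1[OF sexp_card[OF assms(3)] g1])
  show ?thesis using g1 g2 by blast
qed

end
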